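(* Let $K$ be a field with a derivation $\partial$, and let $K[D]$ be the ring of ordinary linear differential operators over $K$ ($D\circ a=aD+\partial(a)$ for $a\in K$). Let $L\in K[D]$ have symbol $\operatorname{Sym}_L=S_1S_2$, where $S_1,S_2\in K[X]$ are homogeneous of degrees $d_1,d_2$. Then every partial factorization of $L$ of order $\max(d_1,d_2)-1$ and type $(S_1)(S_2)$ has at most one extension to a factorization $L=F_1'\circ F_2'$ of type $(S_1)(S_2)$.
   Context: For $L=\sum_{j\le d}a_jD^j$ with $a_j\in K$ and $a_d\neq0$, $\operatorname{ord}(L)=d$ (with $\operatorname{ord}(0)=-\infty$) and $\operatorname{Sym}_L=a_dX^d$. A factorization of type $(S_1)(S_2)$ is $L=F_1\circ F_2$ with $\operatorname{Sym}_{F_i}=S_i$. For $t\in\{0,\dots,\operatorname{ord}L\}$, a partial factorization of order $t$ and type $(S_1)(S_2)$ is a composition $F_1\circ F_2$ with $\operatorname{Sym}_{F_i}=S_i$ and $\operatorname{ord}(L-F_1\circ F_2)<t$. A partial factorization $F_1'\circ F_2'$ of order $t'<t$ is an extension of one $F_1\circ F_2$ of order $t$ if $\operatorname{ord}(F_i-F_i')<t-(d-d_i)$ for $i=1,2$, where $d=\operatorname{ord}L$. A factorization is a partial factorization of order $0$. *)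

theory Defs
  imports "HOL-Computational_Algebra.Polynomial" "HOL-Library.Extended_Real"
begin

definition is_derivation :: "('a::field \<Rightarrow> 'a) \<Rightarrow> bool" where
  "is_derivation \<delta> \<longleftrightarrow> (\<forall>a b. \<delta> (a + b) = \<delta> a + \<delta> b \<and> \<delta> (a * b) = a * \<delta> b + \<delta> a * b)"

text \<open>A differential operator \<open>L = \<Sum>j a_j D^j\<close> is represented by the polynomial with
  coefficients \<open>a_j\<close> (i.e. \<open>coeff L j = a_j\<close>). Composition in \<open>K[D]\<close> is given by the Leibniz
  rule \<open>(a D^i) \<circ> (b D^j) = \<Sum>k\<le>i. a (i choose k) \<delta>^k(b) D^(i-k+j)\<close>, which is the
  unique extension of \<open>D \<circ> a = a D + \<delta>(a)\<close>.\<close>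
definition dcomp :: "('a::field \<Rightarrow> 'a) \<Rightarrow> 'a poly \<Rightarrow> 'a poly \<Rightarrow> 'a poly" where
  "dcomp \<delta> F G = (\<Sum>i\<le>degree F. \<Sum>j\<le>degree G. \<Sum>k\<le>i.
      monom (coeff F i * of_nat (i choose k) * (\<delta> ^^ k) (coeff G j)) (i - k + j))"

definition dord :: "'a::zero poly \<Rightarrow> ereal" where
  "dord P = (if P = 0 then -\<infinity> else ereal (real (degree P)))"

definition Sym :: "'a::zero poly \<Rightarrow> 'a poly" where
  "Sym L = monom (lead_coeff L) (degree L)"

definition homogeneous :: "'a::zero poly \<Rightarrow> nat \<Rightarrow> bool" where
  "homogeneous S d \<longleftrightarrow> (\<exists>c. S = monom c d)"

definition partial_fact ::
  "('a::field \<Rightarrow> 'a) \<Rightarrow> 'a poly \<Rightarrow> int \<Rightarrow> 'a poly \<Rightarrow> 'a poly \<Rightarrow> 'a poly \<Rightarrow> 'a poly \<Rightarrow> bool" where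
  "partial_fact \<delta> L t S1 S2 F1 F2 \<longleftrightarrow>
     0 \<le> t \<and> t \<le> int (degree L) \<and> Sym F1 = S1 \<and> Sym F2 = S2 \<and>
     dord (L - dcomp \<delta> F1 F2) < ereal (real_of_int t)"

definition is_extension ::
  "('a::field \<Rightarrow> 'a) \<Rightarrow> 'a poly \<Rightarrow> 'a poly \<Rightarrow> 'a poly \<Rightarrow> int \<Rightarrow> 'a poly \<Rightarrow> 'a poly
     \<Rightarrow> int \<Rightarrow> 'a poly \<Rightarrow> 'a poly \<Rightarrow> bool" where
  "is_extension \<delta> L S1 S2 t F1 F2 t' F1' F2' \<longleftrightarrow>
     partial_fact \<delta> L t S1 S2 F1 F2 \<and> partial_fact \<delta> L t' S1 S2 F1' F2' \<and> t' < t \<and>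
     dord (F1 - F1') < ereal (real_of_int (t - (int (degree L) - int (degree F1)))) \<and>
     dord (F2 - F2') < ereal (real_of_int (t - (int (degree L) - int (degree F2))))"

end

theory Submission
  imports Defs
begin

definition dc :: "('a::field \<Rightarrow> 'a) \<Rightarrow> nat \<Rightarrow> nat \<Rightarrow> 'a poly \<Rightarrow> 'a poly \<Rightarrow> 'a poly" where
  "dc \<delta> N M F G = (\<Sum>i\<le>N. \<Sum>j\<le>M. \<Sum>k\<le>i.
      monom (coeff F i * of_nat (i choose k) * (\<delta> ^^ k) (coeff G j)) (i - k + j))"

lemma der0: "is_derivation \<delta> \<Longrightarrow> \<delta> 0 = 0"
  unfolding is_derivation_def by (metis add_0 add_cancel_right_right)

lemma der_diff: "is_derivation \<delta> \<Longrightarrow> \<delta> (a - b) = \<delta> a - \<delta> b"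
  unfolding is_derivation_def by (metis add_diff_cancel eq_diff_eq)

lemma derpow0: "is_derivation \<delta> \<Longrightarrow> (\<delta> ^^ k) 0 = 0"
  by (induction k) (auto simp: der0)

lemma derpow_diff: "is_derivation \<delta> \<Longrightarrow> (\<delta> ^^ k) (a - b) = (\<delta> ^^ k) a - (\<delta> ^^ k) b"
  by (induction k) (auto simp: der_diff)

lemma dcomp_dc:
  assumes d: "is_derivation \<delta>" and "degree F \<le> N" "degree G \<le> M"
  shows "dcomp \<delta> F G = dc \<delta> N M F G"
proof -
  have "dcomp \<delta> F G = (\<Sum>i\<le>degree F. \<Sum>j\<le>M. \<Sum>k\<le>i.
      monom (coeff F i * of_nat (i choose k) * (\<delta> ^^ k) (coeff G j)) (i - k + j))"
    unfolding dcomp_def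
    apply (rule sum.cong[OF refl])
    apply (rule sum.mono_neutral_left)
    using assms by (auto simp: coeff_eq_0 derpow0)
  also have "\<dots> = dc \<delta> N M F G"
    unfolding dc_def
    apply (rule sum.mono_neutral_left)
    using assms by (auto simp: coeff_eq_0)
  finally show ?thesis .
qed

lemma dc_diff1: "dc \<delta> N M (F - G) H = dc \<delta> N M F H - dc \<delta> N M G H"
  unfolding dc_def by (simp add: sum_subtractf[symmetric] diff_monom algebra_simps)

lemma dc_diff2: "is_derivation \<delta> \<Longrightarrow> dc \<delta> N M H (F - G) = dc \<delta> N M H F - dc \<delta> N M H G"
  unfolding dc_def by (simp add: sum_subtractf[symmetric] diff_monom algebra_simps derpow_diff)

lemma dcomp_lead:
  "coeff (dcomp \<delta> F G) (degree F + degree G) = lead_coeff F * lead_coeff G"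
proof -
  have "coeff (dcomp \<delta> F G) (degree F + degree G) =
     (\<Sum>i\<le>degree F. \<Sum>j\<le>degree G. \<Sum>k\<le>i.
       (if i = degree F then if j = degree G then if k = 0 then lead_coeff F * lead_coeff G else 0 else 0 else 0))"
    unfolding dcomp_def coeff_sum
    apply (intro sum.cong refl)
    by auto
  also have "\<dots> = (\<Sum>i\<le>degree F. \<Sum>j\<le>degree G.
       (if i = degree F then if j = degree G then lead_coeff F * lead_coeff G else 0 else 0))"
    by (intro sum.cong refl) (simp add: sum.delta)
  also have "\<dots> = (\<Sum>i\<le>degree F.
       (if i = degree F then lead_coeff F * lead_coeff G else 0))"
    by (intro sum.cong refl) (simp add: sum.delta)
  also have "\<dots> = lead_coeff F * lead_coeff G"
    by (simp add: sum.delta)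
  finally show ?thesis .
qed

lemma dcomp_nz:
  assumes "F \<noteq> 0" "G \<noteq> 0" shows "dcomp \<delta> F G \<noteq> 0"
  using dcomp_lead[of \<delta> F G] assms by (metis coeff_0 leading_coeff_0_iff mult_eq_0_iff)

lemma dord_neg: "dord X < ereal r \<Longrightarrow> r \<le> 0 \<Longrightarrow> X = 0"
  unfolding dord_def by (auto split: if_splits)

lemma monom_eq: "monom a n = monom b m \<Longrightarrow> b \<noteq> 0 \<Longrightarrow> a = b \<and> n = m"
  by (metis coeff_monom)


lemma ext_info:
  assumes "is_extension \<delta> L S1 S2 t F1 F2 0 G1 G2"
  shows "Sym G1 = S1 \<and> Sym G2 = S2 \<and> dcomp \<delta> G1 G2 = L \<and>
     dord (F1 - G1) < ereal (real_of_int (t - (int (degree L) - int (degree F1)))) \<and>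
     dord (F2 - G2) < ereal (real_of_int (t - (int (degree L) - int (degree F2))))"
  using assms dord_neg[of "L - dcomp \<delta> G1 G2" 0]
  unfolding is_extension_def partial_fact_def by auto

lemma sym_info:
  assumes "Sym G = monom c d" "c \<noteq> 0"
  shows "G \<noteq> 0 \<and> degree G = d"
proof -
  have "lead_coeff G = c \<and> degree G = d" using monom_eq[OF assms[unfolded Sym_def]] by auto
  thus ?thesis using assms(2) by auto
qed

theorem mainTheorem3:
  fixes \<delta> :: "'a::field \<Rightarrow> 'a"
    and L S1 S2 F1 F2 :: "'a poly" and d1 d2 :: nat
  assumes "is_derivation \<delta>"
    and "L \<noteq> 0"
    and "Sym L = S1 * S2"
    and "homogeneous S1 d1" and "homogeneous S2 d2"
    and "partial_fact \<delta> L (int (max d1 d2) - 1) S1 S2 F1 F2"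
  shows "\<forall>G1 G2 H1 H2.
           is_extension \<delta> L S1 S2 (int (max d1 d2) - 1) F1 F2 0 G1 G2 \<and>
           is_extension \<delta> L S1 S2 (int (max d1 d2) - 1) F1 F2 0 H1 H2
           \<longrightarrow> G1 = H1 \<and> G2 = H2"
proof (intro allI impI)
  fix G1 G2 H1 H2
  assume A: "is_extension \<delta> L S1 S2 (int (max d1 d2) - 1) F1 F2 0 G1 G2 \<and>
           is_extension \<delta> L S1 S2 (int (max d1 d2) - 1) F1 F2 0 H1 H2"
  note d = assms(1)
  obtain c1 where c1: "S1 = monom c1 d1" using assms(4) unfolding homogeneous_def by auto
  obtain c2 where c2: "S2 = monom c2 d2" using assms(5) unfolding homogeneous_def by auto
  have SL: "monom (lead_coeff L) (degree L) = monom (c1 * c2) (d1 + d2)"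
    using assms(3) c1 c2 by (simp add: Sym_def mult_monom)
  have lcL: "lead_coeff L \<noteq> 0" using assms(2) by simp
  have c12: "c1 * c2 \<noteq> 0" using SL lcL by (metis monom_eq_0_iff)
  hence c1nz: "c1 \<noteq> 0" and c2nz: "c2 \<noteq> 0" by auto
  have degL: "degree L = d1 + d2" using monom_eq[OF SL c12] by simp
  have PF: "Sym F1 = S1" "Sym F2 = S2" using assms(6) unfolding partial_fact_def by auto
  have F1: "F1 \<noteq> 0 \<and> degree F1 = d1" using sym_info[OF PF(1)[unfolded c1] c1nz] .
  have F2: "F2 \<noteq> 0 \<and> degree F2 = d2" using sym_info[OF PF(2)[unfolded c2] c2nz] .
  note EG = ext_info[OF conjunct1[OF A]] and EH = ext_info[OF conjunct2[OF A]]
  have G1: "G1 \<noteq> 0 \<and> degree G1 = d1" using sym_info[of G1 c1 d1] EG c1 c1nz by auto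
  have G2: "G2 \<noteq> 0 \<and> degree G2 = d2" using sym_info[of G2 c2 d2] EG c2 c2nz by auto
  have H1: "H1 \<noteq> 0 \<and> degree H1 = d1" using sym_info[of H1 c1 d1] EH c1 c1nz by auto
  have H2: "H2 \<noteq> 0 \<and> degree H2 = d2" using sym_info[of H2 c2 d2] EH c2 c2nz by auto
  have eq: "dcomp \<delta> G1 G2 = dcomp \<delta> H1 H2" using EG EH by simp
  show "G1 = H1 \<and> G2 = H2"
  proof (cases "d2 \<le> d1")
    case True
    have r: "real_of_int (int (max d1 d2) - 1 - (int (degree L) - int (degree F2))) \<le> 0"
      using True degL F2 by simp
    have "F2 - G2 = 0" by (rule dord_neg[OF _ r]) (use EG in simp)
    moreover have "F2 - H2 = 0" by (rule dord_neg[OF _ r]) (use EH in simp)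
    ultimately have g2: "G2 = F2" "H2 = F2" by auto
    have "dc \<delta> d1 d2 G1 F2 = dc \<delta> d1 d2 H1 F2"
      using eq g2 dcomp_dc[OF d, of G1 d1 F2 d2] dcomp_dc[OF d, of H1 d1 F2 d2] G1 H1 F2 by simp
    hence "dc \<delta> d1 d2 (G1 - H1) F2 = 0" by (simp add: dc_diff1)
    hence "dcomp \<delta> (G1 - H1) F2 = 0"
      using dcomp_dc[OF d, of "G1 - H1" d1 F2 d2] G1 H1 F2 degree_diff_le[of G1 "degree G1" H1] by auto
    hence "G1 - H1 = 0" using dcomp_nz F2 by blast
    thus ?thesis using g2 by simp
  next
    case False
    have r: "real_of_int (int (max d1 d2) - 1 - (int (degree L) - int (degree F1))) \<le> 0"
      using False degL F1 by simp
    have "F1 - G1 = 0" by (rule dord_neg[OF _ r]) (use EG in simp)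
    moreover have "F1 - H1 = 0" by (rule dord_neg[OF _ r]) (use EH in simp)
    ultimately have g1: "G1 = F1" "H1 = F1" by auto
    have "dc \<delta> d1 d2 F1 G2 = dc \<delta> d1 d2 F1 H2"
      using eq g1 dcomp_dc[OF d, of F1 d1 G2 d2] dcomp_dc[OF d, of F1 d1 H2 d2] G2 H2 F1 by simp
    hence "dc \<delta> d1 d2 F1 (G2 - H2) = 0" by (simp add: dc_diff2[OF d])
    hence "dcomp \<delta> F1 (G2 - H2) = 0"
      using dcomp_dc[OF d, of F1 d1 "G2 - H2" d2] G2 H2 F1 degree_diff_le[of G2 "degree G2" H2] by auto
    hence "G2 - H2 = 0" using dcomp_nz F1 by blast
    thus ?thesis using g1 by simp
  qed
qed

end
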